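(* Suppose Assumptions 1, 2 and 3 hold and that both of the following second-order cone programs are feasible: (P1) minimize $\|\mathbf z-\mu^*\|_U$ over $\mathbf z\in\mathbb R^{\mathbb S}$ subject to $\sum_{s\neq\tilde s}\bar\pi^*(1|s)z(s)\ge\alpha$, $\mathbf z\mathbf 1^\top=1$, $\mathbf z\ge0$; (P2) minimize $\|\mathbf z-\mu^*\|_U$ over $\mathbf z\in\mathbb R^{\mathbb S}$ subject to $\sum_{s\neq\tilde s}\bar\pi^*(0|s)z(s)\ge1-\alpha$, $\mathbf z\mathbf 1^\top=1$, $\mathbf z\ge0$. Let $\eta_1,\eta_2$ be their optimal values, $\eta=\min(\eta_1,\eta_2)$, and $\epsilon^{\mathrm{fe}}_N=2\sqrt2\,\lambda_U^{1/2}(|S^\emptyset|+1)/N$. Then for every system state $x$ of the $N$-armed system and every $D\subseteq[N]$ with $\|x(D)-m(D)\mu^*\|_U\le\eta m(D)-\epsilon^{\mathrm{fe}}_N$, $$\sum_{s\neq\tilde s}\bar\pi^*(1|s)x(D,s)\le\alpha m(D)-\frac{|S^\emptyset|+1}{N}\quad\text{and}\quad\sum_{s\neq\tilde s}\bar\pi^*(0|s)x(D,s)\le(1-\alpha)m(D)-\frac{|S^\emptyset|+1}{N}.$$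
   Context: Single-armed MDP $(\mathbb S,\{0,1\},P,r)$, finite $\mathbb S$, budget $\alpha\in(0,1)$; $N$-armed system with arm states $S(i)$; a system state $x$ assigns to $D\subseteq[N]$ the row vector $x(D)$ with $x(D,s)=\frac1N\#\{i\in D:S(i)=s\}$; $m(D)=|D|/N$. LP relaxation: maximize $\sum r(s,a)y(s,a)$ over $y\ge0$ s.t. $\sum_sy(s,1)=\alpha$, $\sum_{s',a}y(s',a)P(s',a,s)=\sum_ay(s,a)$ for all $s$, $\sum y=1$; $y^*$ a fixed optimal solution. $\bar\pi^*(a|s)=y^*(s,a)/(y^*(s,0)+y^*(s,1))$ if denominator $>0$, else $1/2$; $P_{\bar\pi^*}(s,s')=\sum_a\bar\pi^*(a|s)P(s,a,s')$; $\mu^*(s)=y^*(s,0)+y^*(s,1)$; $\mathbf 1$ all-ones row vector. Assumption 1: $1$ is a simple eigenvalue of $P_{\bar\pi^*}$, others of modulus $<1$. Assumption 2: unique $\tilde s$ with $y^*(\tilde s,0),y^*(\tilde s,1)>0$. $\Phi=P_{\bar\pi^*}-\mathbf 1^\top\mu^*-(c-\alpha\mathbf 1)^\top(P_1(\tilde s)-P_0(\tilde s))$, $c=(\bar\pi^*(1|s))_s$, $P_a(\tilde s)=(P(\tilde s,a,s))_s$. Assumption 3: all eigenvalues of $\Phi$ have modulus $<1$. $S^\emptyset=\{s:y^*(s,1)=y^*(s,0)=0\}$. $U=\sum_{k\ge0}\Phi^k(\Phi^\top)^k$, $\|v\|_U=\sqrt{vUv^\top}$, $\lambda_U$ the largest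 eigenvalue of $U$. *)

theory Defs
  imports "Jordan_Normal_Form.Char_Poly"
begin

text \<open>The finite state space is {0..<n} (state s is the natural number s < n).
Actions are 0 (passive) and 1 (active). P s a s' is the transition probability,
r s a the reward, y s a an LP variable. Row vectors are functions nat => real,
only their entries at indices < n matter. The N arms are indexed by {1..N},
Sa i is the state of arm i.\<close>

definition is_mdp :: "nat \<Rightarrow> (nat \<Rightarrow> nat \<Rightarrow> nat \<Rightarrow> real) \<Rightarrow> bool" where
  "is_mdp n P \<longleftrightarrow> (\<forall>s<n. \<forall>a<2. (\<forall>s'<n. P s a s' \<ge> 0) \<and> (\<Sum>s'<n. P s a s') = 1)"

definition lp_feasible :: "nat \<Rightarrow> (nat \<Rightarrow> nat \<Rightarrow> nat \<Rightarrow> real) \<Rightarrow> real \<Rightarrow> (nat \<Rightarrow> nat \<Rightarrow> real) \<Rightarrow> bool" where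
  "lp_feasible n P \<alpha> y \<longleftrightarrow>
     (\<forall>s<n. \<forall>a<2. y s a \<ge> 0) \<and>
     (\<Sum>s<n. y s 1) = \<alpha> \<and>
     (\<forall>s<n. (\<Sum>s'<n. \<Sum>a<2. y s' a * P s' a s) = (\<Sum>a<2. y s a)) \<and>
     (\<Sum>s<n. \<Sum>a<2. y s a) = 1"

definition lp_objective :: "nat \<Rightarrow> (nat \<Rightarrow> nat \<Rightarrow> real) \<Rightarrow> (nat \<Rightarrow> nat \<Rightarrow> real) \<Rightarrow> real" where
  "lp_objective n r y = (\<Sum>s<n. \<Sum>a<2. r s a * y s a)"

definition lp_optimal :: "nat \<Rightarrow> (nat \<Rightarrow> nat \<Rightarrow> nat \<Rightarrow> real) \<Rightarrow> (nat \<Rightarrow> nat \<Rightarrow> real) \<Rightarrow> real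
     \<Rightarrow> (nat \<Rightarrow> nat \<Rightarrow> real) \<Rightarrow> bool" where
  "lp_optimal n P r \<alpha> y \<longleftrightarrow> lp_feasible n P \<alpha> y \<and>
     (\<forall>y'. lp_feasible n P \<alpha> y' \<longrightarrow> lp_objective n r y' \<le> lp_objective n r y)"

definition mu_star :: "(nat \<Rightarrow> nat \<Rightarrow> real) \<Rightarrow> nat \<Rightarrow> real" where
  "mu_star y s = y s 0 + y s 1"

definition pibar :: "(nat \<Rightarrow> nat \<Rightarrow> real) \<Rightarrow> nat \<Rightarrow> nat \<Rightarrow> real" where
  "pibar y a s = (if y s 0 + y s 1 > 0 then y s a / (y s 0 + y s 1) else 1/2)"

definition P_pibar :: "nat \<Rightarrow> (nat \<Rightarrow> nat \<Rightarrow> nat \<Rightarrow> real) \<Rightarrow> (nat \<Rightarrow> nat \<Rightarrow> real) \<Rightarrow> real mat" where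
  "P_pibar n P y = mat n n (\<lambda>(s, s'). \<Sum>a<2. pibar y a s * P s a s')"

definition Phi_mat :: "nat \<Rightarrow> (nat \<Rightarrow> nat \<Rightarrow> nat \<Rightarrow> real) \<Rightarrow> real \<Rightarrow> (nat \<Rightarrow> nat \<Rightarrow> real) \<Rightarrow> nat \<Rightarrow> real mat" where
  "Phi_mat n P \<alpha> y st = mat n n (\<lambda>(s, s').
      (\<Sum>a<2. pibar y a s * P s a s') - mu_star y s'
      - (pibar y 1 s - \<alpha>) * (P st 1 s' - P st 0 s'))"

definition cmat :: "real mat \<Rightarrow> complex mat" where
  "cmat A = map_mat complex_of_real A"

definition assumption1 :: "real mat \<Rightarrow> bool" where
  "assumption1 A \<longleftrightarrow> order 1 (char_poly (cmat A)) = 1 \<and>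
     (\<forall>ev. eigenvalue (cmat A) ev \<and> ev \<noteq> 1 \<longrightarrow> cmod ev < 1)"

definition assumption3 :: "real mat \<Rightarrow> bool" where
  "assumption3 A \<longleftrightarrow> (\<forall>ev. eigenvalue (cmat A) ev \<longrightarrow> cmod ev < 1)"

definition U_mat :: "real mat \<Rightarrow> real mat" where
  "U_mat A = mat (dim_row A) (dim_row A)
     (\<lambda>(i, j). \<Sum>k. ((A ^\<^sub>m k) * (transpose_mat A ^\<^sub>m k)) $$ (i, j))"

definition normU :: "nat \<Rightarrow> real mat \<Rightarrow> (nat \<Rightarrow> real) \<Rightarrow> real" where
  "normU n U v = sqrt (\<Sum>i<n. \<Sum>j<n. v i * U $$ (i, j) * v j)"

definition lambda_max :: "real mat \<Rightarrow> real" where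
  "lambda_max A = Max {ev. eigenvalue A ev}"

definition S_empty :: "nat \<Rightarrow> (nat \<Rightarrow> nat \<Rightarrow> real) \<Rightarrow> nat set" where
  "S_empty n y = {s. s < n \<and> y s 1 = 0 \<and> y s 0 = 0}"

text \<open>Feasible sets of the two SOCPs; a \<in> {1,0} selects (P1) resp. (P2), with
right-hand side alpha resp. 1 - alpha.\<close>
definition socp_feasible :: "nat \<Rightarrow> (nat \<Rightarrow> nat \<Rightarrow> real) \<Rightarrow> nat \<Rightarrow> nat \<Rightarrow> real \<Rightarrow> (nat \<Rightarrow> real) set" where
  "socp_feasible n y st a b = {z. (\<Sum>s\<in>{s. s < n \<and> s \<noteq> st}. pibar y a s * z s) \<ge> b
      \<and> (\<Sum>s<n. z s) = 1 \<and> (\<forall>s<n. z s \<ge> 0)}"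

definition socp_value :: "nat \<Rightarrow> real mat \<Rightarrow> (nat \<Rightarrow> nat \<Rightarrow> real) \<Rightarrow> nat \<Rightarrow> nat \<Rightarrow> real \<Rightarrow> real" where
  "socp_value n U y st a b = Inf ((\<lambda>z. normU n U (\<lambda>s. z s - mu_star y s)) ` socp_feasible n y st a b)"

definition xD :: "nat \<Rightarrow> (nat \<Rightarrow> nat) \<Rightarrow> nat set \<Rightarrow> nat \<Rightarrow> real" where
  "xD N Sa D s = real (card {i\<in>D. Sa i = s}) / real N"

definition mD :: "nat \<Rightarrow> nat set \<Rightarrow> real" where
  "mD N D = real (card D) / real N"

end

theory Submission
  imports Defs "Jordan_Normal_Form.Spectral_Radius" "HOL-Analysis.Function_Topology"
begin

lemma pow_mat_carrier': "A \<in> carrier_mat n n \<Longrightarrow> A ^\<^sub>m k \<in> carrier_mat n n"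
  by simp

lemma pow_commute: assumes "A \<in> carrier_mat n n" shows "A ^\<^sub>m k * A = A * A ^\<^sub>m k"
proof (induction k)
  case 0 then show ?case using assms by simp
next
  case (Suc k)
  have "A ^\<^sub>m Suc k * A = (A ^\<^sub>m k * A) * A" by simp
  also have "\<dots> = (A * A ^\<^sub>m k) * A" using Suc by simp
  also have "\<dots> = A * (A ^\<^sub>m k * A)" using assms by (simp add: assoc_mult_mat[of _ n n _ n _ n])
  finally show ?case by simp
qed

lemma transpose_pow: fixes A :: "'a::comm_ring_1 mat" assumes "A \<in> carrier_mat n n" shows "A\<^sup>T ^\<^sub>m k = (A ^\<^sub>m k)\<^sup>T"
proof (induction k)
  case 0 then show ?case using assms by simp
next
  case (Suc k)
  have "A\<^sup>T ^\<^sub>m Suc k = (A ^\<^sub>m k)\<^sup>T * A\<^sup>T" using Suc by simp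
  also have "\<dots> = (A * A ^\<^sub>m k)\<^sup>T" using transpose_mult[OF assms pow_mat_carrier'[OF assms, of k]] by simp
  also have "\<dots> = (A ^\<^sub>m Suc k)\<^sup>T" using pow_commute[OF assms, of k] by simp
  finally show ?case .
qed

lemma smult_pow: fixes A :: "'a::comm_ring_1 mat" assumes "A \<in> carrier_mat n n" shows "(c \<cdot>\<^sub>m A) ^\<^sub>m k = (c ^ k) \<cdot>\<^sub>m (A ^\<^sub>m k)"
proof (induction k)
  case 0 then show ?case using assms by (auto simp: smult_mat_def)
next
  case (Suc k)
  have "(c \<cdot>\<^sub>m A) ^\<^sub>m Suc k = ((c ^ k) \<cdot>\<^sub>m (A ^\<^sub>m k)) * (c \<cdot>\<^sub>m A)" using Suc by simp
  also have "\<dots> = (c ^ k) \<cdot>\<^sub>m (A ^\<^sub>m k * (c \<cdot>\<^sub>m A))"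
    using mult_smult_assoc_mat[OF pow_mat_carrier'[OF assms] smult_carrier_mat[OF assms]] by simp
  also have "\<dots> = (c ^ k) \<cdot>\<^sub>m (c \<cdot>\<^sub>m (A ^\<^sub>m Suc k))"
    using assms by (simp add: mult_smult_distrib[of _ n n _ n])
  also have "\<dots> = (c ^ Suc k) \<cdot>\<^sub>m (A ^\<^sub>m Suc k)"
    by (rule eq_matI) auto
  finally show ?case .
qed

lemma smult_mat_vec: assumes "A \<in> carrier_mat n n" "v \<in> carrier_vec n"
  shows "(a \<cdot>\<^sub>m A) *\<^sub>v v = a \<cdot>\<^sub>v (A *\<^sub>v v)"
  using assms by (intro eq_vecI) (auto simp: scalar_prod_def sum_distrib_left mult.assoc)

lemma decay:
  fixes A :: "real mat"
  assumes A: "A \<in> carrier_mat n n" and n: "n > 0" and a3: "assumption3 A"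
  shows "\<exists>C \<rho>. 0 \<le> C \<and> 0 < \<rho> \<and> \<rho> < 1 \<and> (\<forall>k i j. i < n \<longrightarrow> j < n \<longrightarrow> \<bar>(A ^\<^sub>m k) $$ (i,j)\<bar> \<le> C * \<rho> ^ k)"
proof -
  define Cm where "Cm = cmat A"
  have Cm: "Cm \<in> carrier_mat n n" using A by (simp add: Cm_def cmat_def)
  define sr where "sr = spectral_radius Cm"
  have sr1: "sr < 1"
  proof -
    obtain ev where "ev \<in> spectrum Cm" "sr = norm ev" using spectral_radius_mem_max(1)[OF Cm n] sr_def by auto
    then show ?thesis using a3 unfolding assumption3_def spectrum_def Cm_def by auto
  qed
  have sr0: "0 \<le> sr" using spectral_radius_mem_max(1)[OF Cm n] sr_def by auto
  define \<rho> where "\<rho> = (1 + sr) / 2"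
  have r0: "0 < \<rho>" "\<rho> < 1" "sr < \<rho>" using sr0 sr1 by (auto simp: \<rho>_def)
  define B where "B = complex_of_real (1/\<rho>) \<cdot>\<^sub>m Cm"
  have B: "B \<in> carrier_mat n n" using Cm by (simp add: B_def)
  have "spectral_radius B < 1"
  proof -
    obtain ev where ev: "ev \<in> spectrum B" "spectral_radius B = norm ev" using spectral_radius_mem_max(1)[OF B n] by auto
    then obtain v where v: "v \<in> carrier_vec n" "v \<noteq> 0\<^sub>v n" "B *\<^sub>v v = ev \<cdot>\<^sub>v v"
      using B unfolding spectrum_def eigenvalue_def eigenvector_def by auto
    have "complex_of_real \<rho> \<cdot>\<^sub>v (B *\<^sub>v v) = complex_of_real \<rho> \<cdot>\<^sub>v (ev \<cdot>\<^sub>v v)" using v by simp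
    then have "Cm *\<^sub>v v = (complex_of_real \<rho> * ev) \<cdot>\<^sub>v v"
      using v Cm r0 unfolding B_def by (simp add: smult_mat_vec[OF Cm] smult_smult_assoc)
    then have "eigenvalue Cm (complex_of_real \<rho> * ev)"
      unfolding eigenvalue_def eigenvector_def using v Cm by auto
    then have "norm (complex_of_real \<rho> * ev) \<le> sr"
      using spectral_radius_mem_max(2)[OF Cm n] sr_def unfolding spectrum_def by auto
    then have "\<rho> * norm ev \<le> sr" using r0 by (simp add: norm_mult)
    then have "\<rho> * norm ev < \<rho> * 1" using r0 by linarith
    then have "norm ev < 1" using r0 mult_less_cancel_left_pos by blast
    then show ?thesis using ev r0 by simp
  qed
  then obtain c where c: "\<And>k. norm_bound (B ^\<^sub>m k) c"
    using spectral_radius_jnf_norm_bound_less_1_upper_triangular[OF B] by auto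
  have "\<forall>k i j. i < n \<longrightarrow> j < n \<longrightarrow> \<bar>(A ^\<^sub>m k) $$ (i,j)\<bar> \<le> c * \<rho> ^ k"
  proof (intro allI impI)
    fix k i j assume ij: "i < n" "j < n"
    have Bk: "B ^\<^sub>m k = (complex_of_real (1/\<rho>) ^ k) \<cdot>\<^sub>m (Cm ^\<^sub>m k)"
      unfolding B_def by (rule smult_pow[OF Cm])
    have "Cm ^\<^sub>m k = cmat (A ^\<^sub>m k)"
      unfolding Cm_def cmat_def
      by (rule sym, rule semiring_hom.mat_hom_pow[OF _ A]) (unfold_locales, auto)
    then have e: "(B ^\<^sub>m k) $$ (i,j) = complex_of_real ((1/\<rho>)^k * (A ^\<^sub>m k) $$ (i,j))"
      using ij A unfolding Bk cmat_def by simp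
    have "norm ((B ^\<^sub>m k) $$ (i,j)) \<le> c" using c[of k] ij B unfolding norm_bound_def by auto
    then have "(1/\<rho>)^k * \<bar>(A ^\<^sub>m k) $$ (i,j)\<bar> \<le> c" using e r0 by (simp add: norm_mult norm_power norm_divide)
    then have "\<bar>(A ^\<^sub>m k) $$ (i,j)\<bar> \<le> c * \<rho>^k" using r0
      by (simp add: power_one_over field_simps)
    then show "\<bar>(A ^\<^sub>m k) $$ (i,j)\<bar> \<le> c * \<rho> ^ k" .
  qed
  moreover have "0 \<le> c" using c[of 0] B n unfolding norm_bound_def
    by (metis norm_ge_zero order_trans pow_mat_dim_square)
  ultimately show ?thesis using r0 by blast
qed

definition qf :: "nat \<Rightarrow> real mat \<Rightarrow> (nat \<Rightarrow> real) \<Rightarrow> real" where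
  "qf n U v = (\<Sum>i<n. \<Sum>j<n. v i * U $$ (i, j) * v j)"

lemma entry_t: fixes A :: "real mat" assumes A: "A \<in> carrier_mat n n" and ij: "i < n" "j < n"
  shows "(A ^\<^sub>m k * A\<^sup>T ^\<^sub>m k) $$ (i,j) = (\<Sum>l<n. (A ^\<^sub>m k) $$ (i,l) * (A ^\<^sub>m k) $$ (j,l))"
proof -
  have Ak: "A ^\<^sub>m k \<in> carrier_mat n n" using A by simp
  have d: "dim_row (A ^\<^sub>m k) = n" "dim_col (A ^\<^sub>m k) = n" using Ak by auto
  have "(A ^\<^sub>m k * (A ^\<^sub>m k)\<^sup>T) $$ (i,j) = row (A ^\<^sub>m k) i \<bullet> col ((A ^\<^sub>m k)\<^sup>T) j"
    by (rule index_mult_mat(1)) (use d ij in auto)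
  also have "\<dots> = (\<Sum>l<n. (A ^\<^sub>m k) $$ (i,l) * (A ^\<^sub>m k) $$ (j,l))"
    using d ij by (simp add: scalar_prod_def lessThan_atLeast0)
  finally show ?thesis unfolding transpose_pow[OF A] .
qed

lemma U_props:
  fixes A :: "real mat"
  assumes A: "A \<in> carrier_mat n n" and n: "n > 0" and a3: "assumption3 A"
  shows "\<And>i j. i < n \<Longrightarrow> j < n \<Longrightarrow> U_mat A $$ (i,j) = U_mat A $$ (j,i)"
    and "\<And>v. qf n (U_mat A) v \<ge> (\<Sum>l<n. (v l)^2)"
    and "U_mat A \<in> carrier_mat n n"
proof -
  obtain C \<rho> where C: "0 \<le> C" "0 < \<rho>" "\<rho> < 1"
    and bd: "\<And>k i j. i < n \<Longrightarrow> j < n \<Longrightarrow> \<bar>(A ^\<^sub>m k) $$ (i,j)\<bar> \<le> C * \<rho> ^ k"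
    using decay[OF A n a3] by blast
  define t where "t k i j = (\<Sum>l<n. (A ^\<^sub>m k) $$ (i,l) * (A ^\<^sub>m k) $$ (j,l))" for k i j
  have Uij: "U_mat A $$ (i,j) = (\<Sum>k. t k i j)" if "i < n" "j < n" for i j
    using that A entry_t[OF A that] unfolding U_mat_def t_def by simp
  have summ: "summable (\<lambda>k. t k i j)" if "i < n" "j < n" for i j
  proof (rule summable_comparison_test)
    show "summable (\<lambda>k. real n * C^2 * (\<rho>^2)^k)"
      using C by (intro summable_mult summable_geometric) (simp add: power_less_one_iff abs_of_pos)
    show "\<exists>N. \<forall>k\<ge>N. norm (t k i j) \<le> real n * C^2 * (\<rho>^2)^k"
    proof (intro exI allI impI)
      fix k :: nat
      have "norm (t k i j) \<le> (\<Sum>l<n. \<bar>(A ^\<^sub>m k) $$ (i,l) * (A ^\<^sub>m k) $$ (j,l)\<bar>)"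
        unfolding t_def real_norm_def by (rule sum_abs)
      also have "\<dots> \<le> (\<Sum>l<n. C^2 * (\<rho>^2)^k)"
      proof (rule sum_mono)
        fix l assume "l \<in> {..<n}"
        then have l: "l < n" by simp
        have "\<bar>(A ^\<^sub>m k) $$ (i,l) * (A ^\<^sub>m k) $$ (j,l)\<bar> \<le> (C * \<rho>^k) * (C * \<rho>^k)"
          unfolding abs_mult by (rule mult_mono) (use bd that l C in auto)
        then show "\<bar>(A ^\<^sub>m k) $$ (i,l) * (A ^\<^sub>m k) $$ (j,l)\<bar> \<le> C^2 * (\<rho>^2)^k"
          by (simp add: power2_eq_square power_mult_distrib power_mult[symmetric] mult_ac)
      qed
      also have "\<dots> = real n * C^2 * (\<rho>^2)^k" by simp
      finally show "norm (t k i j) \<le> real n * C^2 * (\<rho>^2)^k" .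
    qed
  qed
  show "U_mat A \<in> carrier_mat n n" using A unfolding U_mat_def by simp
  show "U_mat A $$ (i,j) = U_mat A $$ (j,i)" if "i < n" "j < n" for i j
    using that by (simp add: Uij t_def mult.commute)
  show "qf n (U_mat A) v \<ge> (\<Sum>l<n. (v l)^2)" for v
  proof -
    define s where "s k = (\<Sum>i<n. \<Sum>j<n. v i * t k i j * v j)" for k
    have ss: "summable s" unfolding s_def
      by (intro summable_sum summable_mult summable_mult2 summ) auto
    have "qf n (U_mat A) v = (\<Sum>i<n. \<Sum>j<n. \<Sum>k. v i * t k i j * v j)"
      unfolding qf_def
    proof (intro sum.cong refl)
      fix i j assume "i \<in> {..<n}" "j \<in> {..<n}"
      then have ij: "i < n" "j < n" by auto
      have "(\<Sum>k. v i * t k i j * v j) = (\<Sum>k. v i * t k i j) * v j"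
        by (rule suminf_mult2[symmetric], rule summable_mult, rule summ[OF ij])
      also have "\<dots> = v i * (\<Sum>k. t k i j) * v j" by (simp add: suminf_mult[OF summ[OF ij]])
      finally show "v i * U_mat A $$ (i, j) * v j = (\<Sum>k. v i * t k i j * v j)" using Uij[OF ij] by simp
    qed
    also have "\<dots> = (\<Sum>i<n. \<Sum>k. \<Sum>j<n. v i * t k i j * v j)"
      by (intro sum.cong refl suminf_sum[symmetric] summable_mult summable_mult2 summ) auto
    also have "\<dots> = (\<Sum>k. s k)" unfolding s_def
      by (intro suminf_sum[symmetric] summable_sum summable_mult summable_mult2 summ) auto
    finally have q: "qf n (U_mat A) v = suminf s" .
    have sk: "s k = (\<Sum>l<n. (\<Sum>i<n. v i * (A ^\<^sub>m k) $$ (i,l))^2)" for k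
    proof -
      have "s k = (\<Sum>i<n. \<Sum>j<n. \<Sum>l<n. v i * (A ^\<^sub>m k) $$ (i,l) * (v j * (A ^\<^sub>m k) $$ (j,l)))"
        unfolding s_def t_def by (simp add: sum_distrib_left sum_distrib_right mult_ac)
      also have "\<dots> = (\<Sum>l<n. \<Sum>i<n. \<Sum>j<n. v i * (A ^\<^sub>m k) $$ (i,l) * (v j * (A ^\<^sub>m k) $$ (j,l)))"
      proof -
        have "\<And>i. (\<Sum>j<n. \<Sum>l<n. v i * (A ^\<^sub>m k) $$ (i,l) * (v j * (A ^\<^sub>m k) $$ (j,l)))
           = (\<Sum>l<n. \<Sum>j<n. v i * (A ^\<^sub>m k) $$ (i,l) * (v j * (A ^\<^sub>m k) $$ (j,l)))"
          by (rule sum.swap)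
        then have "(\<Sum>i<n. \<Sum>j<n. \<Sum>l<n. v i * (A ^\<^sub>m k) $$ (i,l) * (v j * (A ^\<^sub>m k) $$ (j,l)))
          = (\<Sum>i<n. \<Sum>l<n. \<Sum>j<n. v i * (A ^\<^sub>m k) $$ (i,l) * (v j * (A ^\<^sub>m k) $$ (j,l)))" by simp
        also have "\<dots> = (\<Sum>l<n. \<Sum>i<n. \<Sum>j<n. v i * (A ^\<^sub>m k) $$ (i,l) * (v j * (A ^\<^sub>m k) $$ (j,l)))"
          by (rule sum.swap)
        finally show ?thesis .
      qed
      also have "\<dots> = (\<Sum>l<n. (\<Sum>i<n. v i * (A ^\<^sub>m k) $$ (i,l))^2)"
        by (simp add: power2_eq_square sum_product)
      finally show ?thesis .
    qed
    have s0: "s 0 = (\<Sum>l<n. (v l)^2)"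
    proof -
      have "s 0 = (\<Sum>l<n. (\<Sum>i<n. v i * (1\<^sub>m n) $$ (i,l))^2)" using sk[of 0] A by simp
      also have "\<dots> = (\<Sum>l<n. (v l)^2)"
      proof (intro sum.cong refl)
        fix l assume "l \<in> {..<n}"
        then have "(\<Sum>i<n. v i * (1\<^sub>m n) $$ (i,l)) = (\<Sum>i<n. if i = l then v l else 0)"
          by (intro sum.cong refl) auto
        also have "\<dots> = v l" using \<open>l \<in> {..<n}\<close> by simp
        finally show "(\<Sum>i<n. v i * (1\<^sub>m n) $$ (i,l))^2 = (v l)^2" by simp
      qed
      finally show ?thesis .
    qed
    have snn: "\<And>k. 0 \<le> s k" unfolding sk by (intro sum_nonneg) auto
    have "s 0 \<le> suminf s"
      using sum_le_suminf[OF ss, of "{0}"] snn by auto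
    then show ?thesis using q s0 by simp
  qed
qed

definition bf :: "nat \<Rightarrow> real mat \<Rightarrow> (nat \<Rightarrow> real) \<Rightarrow> (nat \<Rightarrow> real) \<Rightarrow> real" where
  "bf n U u v = (\<Sum>i<n. \<Sum>j<n. u i * U $$ (i, j) * v j)"

definition symm :: "nat \<Rightarrow> real mat \<Rightarrow> bool" where
  "symm n U \<longleftrightarrow> (\<forall>i<n. \<forall>j<n. U $$ (i,j) = U $$ (j,i))"

lemma bf_sym: assumes "symm n U" shows "bf n U v u = bf n U u v"
proof -
  have "bf n U v u = (\<Sum>j<n. \<Sum>i<n. v i * U $$ (i, j) * u j)" unfolding bf_def by (rule sum.swap)
  also have "\<dots> = bf n U u v" unfolding bf_def using assms unfolding symm_def
    by (intro sum.cong refl) (auto simp: mult_ac)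
  finally show ?thesis .
qed

lemma qf_bf: "qf n U v = bf n U v v" unfolding qf_def bf_def by simp

lemma qf_expand: assumes "symm n U"
  shows "qf n U (\<lambda>i. u i + t * v i) = qf n U u + 2*t*bf n U u v + t^2 * qf n U v"
proof -
  have "qf n U (\<lambda>i. u i + t * v i) = (\<Sum>i<n. \<Sum>j<n. u i * U $$ (i, j) * u j + t * (u i * U $$ (i, j) * v j)
       + t * (v i * U $$ (i, j) * u j) + t^2 * (v i * U $$ (i, j) * v j))"
    unfolding qf_def by (intro sum.cong refl) (simp add: algebra_simps power2_eq_square)
  also have "\<dots> = qf n U u + t * bf n U u v + t * bf n U v u + t^2 * qf n U v"
    unfolding qf_def bf_def by (simp add: sum.distrib sum_distrib_left)
  finally show ?thesis using bf_sym[OF assms, of v u] by simp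
qed

lemma qf_scale: "qf n U (\<lambda>i. c * v i) = c^2 * qf n U v"
  unfolding qf_def by (simp add: sum_distrib_left power2_eq_square mult_ac)

lemma qf_cong: "(\<And>i. i < n \<Longrightarrow> u i = v i) \<Longrightarrow> qf n U u = qf n U v"
  unfolding qf_def by (intro sum.cong refl) auto

lemma quad_zero: fixes a b :: real assumes "\<And>t. 2*t*a + t^2*b \<le> 0" shows "a = 0"
proof (rule ccontr)
  assume a: "a \<noteq> 0"
  define t where "t = a / (2 * (\<bar>b\<bar> + 1))"
  have h: "2*t*a + t^2*b \<le> 0" by (rule assms)
  have pos: "\<bar>b\<bar> + 1 > 0" by simp
  have "2*t*a = a^2 / (\<bar>b\<bar> + 1)" unfolding t_def using pos by (simp add: field_simps power2_eq_square)
  moreover have "t^2*b \<ge> - (t^2 * \<bar>b\<bar>)" using mult_left_mono[of "-\<bar>b\<bar>" b "t^2"] by simp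
  moreover have "t^2 * \<bar>b\<bar> = a^2 * \<bar>b\<bar> / (4 * (\<bar>b\<bar> + 1)^2)" unfolding t_def by (simp add: power_divide power_mult_distrib power2_eq_square algebra_simps)
  moreover have "a^2 * \<bar>b\<bar> / (4 * (\<bar>b\<bar> + 1)^2) \<le> a^2 / (4 * (\<bar>b\<bar> + 1))"
  proof -
    have e: "a^2 * \<bar>b\<bar> / (4 * (\<bar>b\<bar> + 1)^2) = (a^2/(4*(\<bar>b\<bar>+1))) * (\<bar>b\<bar>/(\<bar>b\<bar>+1))"
      by (simp add: power2_eq_square)
    have "\<bar>b\<bar>/(\<bar>b\<bar>+1) \<le> 1" by simp
    then have "(a^2/(4*(\<bar>b\<bar>+1))) * (\<bar>b\<bar>/(\<bar>b\<bar>+1)) \<le> (a^2/(4*(\<bar>b\<bar>+1))) * 1"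
      using pos by (intro mult_left_mono) auto
    then show ?thesis unfolding e by simp
  qed
  moreover have "a^2 > 0" using a by simp
  ultimately have "0 < 2*t*a + t^2*b" using pos by (smt (verit) divide_pos_pos frac_less2)
  then show False using h by simp
qed

lemma cs: assumes sy: "symm n U" and psd: "\<And>v. 0 \<le> qf n U v"
  shows "(bf n U u v)^2 \<le> qf n U u * qf n U v"
proof -
  let ?b = "bf n U u v" and ?qu = "qf n U u" and ?qv = "qf n U v"
  have h: "0 \<le> ?qu + 2*t*?b + t^2 * ?qv" for t using psd[of "\<lambda>i. u i + t * v i"] qf_expand[OF sy] by simp
  show ?thesis
  proof (cases "?qv = 0")
    case True
    have "?b = 0"
    proof (rule ccontr)
      assume b: "?b \<noteq> 0"
      have "0 \<le> ?qu + 2*(-(?qu+1)/(2*?b))*?b" using h[of "-(?qu+1)/(2*?b)"] True by simp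
      also have "\<dots> = -1" using b by (simp add: field_simps)
      finally show False by simp
    qed
    then show ?thesis using True by simp
  next
    case False
    then have qv: "?qv > 0" using psd[of v] by simp
    have "0 \<le> ?qu + 2*(-?b/?qv)*?b + (-?b/?qv)^2 * ?qv" by (rule h)
    also have "\<dots> = ?qu - ?b^2 / ?qv" using qv by (simp add: field_simps power2_eq_square)
    finally have "?b^2 / ?qv \<le> ?qu" by simp
    then show ?thesis using qv by (simp add: field_simps)
  qed
qed

lemma tri: assumes sy: "symm n U" and psd: "\<And>v. 0 \<le> qf n U v"
  shows "sqrt (qf n U (\<lambda>i. u i + v i)) \<le> sqrt (qf n U u) + sqrt (qf n U v)"
proof -
  let ?b = "bf n U u v" and ?qu = "qf n U u" and ?qv = "qf n U v"
  have e: "qf n U (\<lambda>i. u i + v i) = ?qu + 2*?b + ?qv" using qf_expand[OF sy, of u 1 v] by simp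
  have "\<bar>?b\<bar> \<le> sqrt (?qu * ?qv)" using cs[OF sy psd, of u v] by (intro real_le_rsqrt) simp
  then have "?qu + 2*?b + ?qv \<le> (sqrt ?qu + sqrt ?qv)^2"
    using psd[of u] psd[of v] by (simp add: power2_eq_square real_sqrt_mult algebra_simps)
  then have "sqrt (?qu + 2*?b + ?qv) \<le> sqrt ((sqrt ?qu + sqrt ?qv)^2)" by (rule real_sqrt_le_mono)
  then show ?thesis unfolding e using psd[of u] psd[of v] by simp
qed

lemma sum_delta_mult: fixes n j :: nat assumes "j < n" shows "(\<Sum>i<n. c i * (if i = j then 1 else (0::real))) = c j"
proof -
  have "(\<Sum>i<n. c i * (if i = j then 1 else (0::real))) = (\<Sum>i\<in>{..<n}. if i = j then c i else 0)"
    by (rule sum.cong) auto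
  also have "\<dots> = c j" using assms by (subst sum.delta) auto
  finally show ?thesis .
qed

lemma gsum_expand: fixes u v :: "nat \<Rightarrow> real" shows "(\<Sum>i<n. (u i + t * v i)^2) = (\<Sum>i<n. (u i)^2) + 2*t*(\<Sum>i<n. u i * v i) + t^2 * (\<Sum>i<n. (v i)^2)"
  by (simp add: power2_eq_square algebra_simps sum.distrib sum_distrib_left)

lemma rayleigh:
  assumes U: "U \<in> carrier_mat n n" and n: "n > 0" and sy: "symm n U"
  shows "qf n U w \<le> lambda_max U * (\<Sum>i<n. (w i)^2)"
proof -
  define X where "X = product_topology (\<lambda>_. euclideanreal) {..<n}"
  define f where "f = qf n U"
  define g where "g v = (\<Sum>i<n. (v i)^2)" for v :: "nat \<Rightarrow> real"
  define cube where "cube = PiE {..<n} (\<lambda>_. {-1..1::real})"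
  define K where "K = {x \<in> topspace X. g x \<in> {1}}"
  have cg: "continuous_map X euclideanreal g" unfolding g_def X_def
    by (intro continuous_intros) auto
  have cf: "continuous_map X euclideanreal f" unfolding f_def qf_def X_def
    by (intro continuous_intros) auto
  have ccube: "compactin X cube" unfolding X_def cube_def
    by (subst compactin_PiE) auto
  have clK: "closedin X K" unfolding K_def by (rule closedin_continuous_map_preimage[OF cg]) auto
  have Ksub: "K \<subseteq> cube"
  proof
    fix x assume "x \<in> K"
    then have x: "x \<in> PiE {..<n} (\<lambda>_. UNIV)" "g x = 1" unfolding K_def X_def by auto
    have "x i \<in> {-1..1}" if "i < n" for i
    proof -
      have "(x i)^2 \<le> g x" unfolding g_def using that by (intro member_le_sum) auto
      then have "(x i)^2 \<le> 1^2" using x by simp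
      then have "\<bar>x i\<bar> \<le> 1" using abs_le_square_iff[of "x i" 1] by simp
      then show ?thesis by auto
    qed
    then show "x \<in> cube" using x unfolding cube_def by (auto simp: PiE_iff)
  qed
  have cK: "compactin X K" by (rule closed_compactin[OF ccube Ksub clK])
  have cfK: "compact (f ` K)" using image_compactin[OF cK cf] by simp
  define e0 where "e0 = restrict (\<lambda>i. if i = 0 then 1 else (0::real)) {..<n}"
  have "g e0 = (\<Sum>i\<in>{..<n}. if i = 0 then 1 else 0)" unfolding g_def e0_def
    by (rule sum.cong) auto
  then have "g e0 = 1" using n by simp
  then have "e0 \<in> K" unfolding K_def X_def e0_def by auto
  then have "f ` K \<noteq> {}" by auto
  then obtain v0 where v0K: "v0 \<in> K" and v0max: "\<And>x. x \<in> K \<Longrightarrow> f x \<le> f v0"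
    using compact_attains_sup[OF cfK] by auto
  define lam where "lam = f v0"
  have gv0: "g v0 = 1" using v0K unfolding K_def by auto
  have R: "f w \<le> lam * g w" for w
  proof (cases "g w = 0")
    case True
    then have "\<forall>i\<in>{..<n}. (w i)^2 = 0" unfolding g_def by (subst sum_nonneg_eq_0_iff[symmetric]) auto
    then have "f w = f (\<lambda>_. 0)" unfolding f_def by (intro qf_cong) auto
    then show ?thesis using True unfolding f_def qf_def by simp
  next
    case False
    have gpos: "g w > 0" using False unfolding g_def by (metis less_eq_real_def sum_nonneg zero_le_power2)
    define u where "u = restrict (\<lambda>i. w i / sqrt (g w)) {..<n}"
    have gnn: "0 \<le> (\<Sum>i<n. (w i)^2)" by (intro sum_nonneg) auto
    have "g u = (\<Sum>i<n. (w i)^2 / g w)" unfolding g_def u_def using gpos gnn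
      by (intro sum.cong refl) (simp add: power_divide)
    also have "\<dots> = 1" using gpos unfolding g_def by (simp add: sum_divide_distrib[symmetric])
    finally have "u \<in> K" unfolding K_def X_def u_def by auto
    then have "f u \<le> lam" using v0max lam_def by auto
    moreover have "f u = (1 / sqrt (g w))^2 * f w" unfolding f_def
      by (subst qf_scale[symmetric], rule qf_cong) (simp add: u_def)
    moreover have "(1 / sqrt (g w))^2 = 1 / g w" using gpos by (simp add: power_divide)
    ultimately have "f w / g w \<le> lam" by simp
    then show ?thesis using gpos by (simp add: field_simps)
  qed
  have eig: "(\<Sum>i<n. v0 i * U $$ (i,j)) = lam * v0 j" if j: "j < n" for j
  proof -
    define e where "e = (\<lambda>i. if i = j then 1 else (0::real))"
    have "g e = (\<Sum>i\<in>{..<n}. if i = j then 1 else 0)" unfolding g_def e_def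
      by (rule sum.cong) auto
    then have ge: "g e = 1" using j by simp
    have ie: "(\<Sum>i<n. v0 i * e i) = v0 j" unfolding e_def using j by (rule sum_delta_mult)
    have be: "bf n U v0 e = (\<Sum>i<n. v0 i * U $$ (i,j))" unfolding bf_def e_def
      using j by (simp add: sum_delta_mult)
    have "2*t*(bf n U v0 e - lam * v0 j) + t^2 * (f e - lam) \<le> 0" for t
    proof -
      have "f (\<lambda>i. v0 i + t * e i) \<le> lam * g (\<lambda>i. v0 i + t * e i)" by (rule R)
      then have "f v0 + 2*t*bf n U v0 e + t^2 * f e \<le> lam * (g v0 + 2*t*(\<Sum>i<n. v0 i * e i) + t^2 * g e)"
        unfolding f_def using qf_expand[OF sy] gsum_expand unfolding g_def by metis
      then show ?thesis using ge ie gv0 lam_def by (simp add: algebra_simps)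
    qed
    then have "bf n U v0 e - lam * v0 j = 0" by (intro quad_zero[of _ "f e - lam"]) auto
    then show ?thesis using be by simp
  qed
  define vv where "vv = vec n v0"
  have vv: "vv \<in> carrier_vec n" unfolding vv_def by simp
  have "U *\<^sub>v vv = lam \<cdot>\<^sub>v vv"
  proof (rule eq_vecI)
    show "dim_vec (U *\<^sub>v vv) = dim_vec (lam \<cdot>\<^sub>v vv)" using U vv by simp
    fix j assume "j < dim_vec (lam \<cdot>\<^sub>v vv)"
    then have j: "j < n" using vv by simp
    have "(U *\<^sub>v vv) $ j = (\<Sum>i<n. U $$ (j,i) * v0 i)"
      using U j unfolding vv_def by (simp add: scalar_prod_def lessThan_atLeast0 row_def)
    also have "\<dots> = (\<Sum>i<n. v0 i * U $$ (i,j))"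
      using sy j unfolding symm_def by (intro sum.cong refl) (auto simp: mult.commute)
    also have "\<dots> = (lam \<cdot>\<^sub>v vv) $ j" using eig[OF j] j unfolding vv_def by simp
    finally show "(U *\<^sub>v vv) $ j = (lam \<cdot>\<^sub>v vv) $ j" .
  qed
  moreover have "vv \<noteq> 0\<^sub>v n"
  proof
    assume "vv = 0\<^sub>v n"
    then have "\<And>i. i < n \<Longrightarrow> v0 i = 0" unfolding vv_def by (metis index_vec index_zero_vec(1))
    then have "g v0 = 0" unfolding g_def by simp
    then show False using gv0 by simp
  qed
  ultimately have ev: "eigenvalue U lam" unfolding eigenvalue_def eigenvector_def using U vv by auto
  have fin: "finite {ev. eigenvalue U ev}" using card_finite_spectrum(1)[OF U] unfolding spectrum_def by simp
  have "lam \<le> lambda_max U" unfolding lambda_max_def using fin ev by (intro Max_ge) auto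
  moreover have "0 \<le> g w" unfolding g_def by (intro sum_nonneg) auto
  ultimately have "lam * g w \<le> lambda_max U * g w" by (intro mult_right_mono)
  then show ?thesis using R[of w] unfolding f_def g_def by simp
qed

lemma sum_if_in: fixes f :: "nat \<Rightarrow> real" assumes "L \<subseteq> {..<n}"
  shows "(\<Sum>s<n. if s \<in> L then f s else 0) = sum f L"
proof -
  have "(\<Sum>s<n. if s \<in> L then f s else 0) = sum f ({..<n} \<inter> {s. s \<in> L})"
    by (simp add: sum.If_cases)
  also have "{..<n} \<inter> {s. s \<in> L} = L" using assms by auto
  finally show ?thesis .
qed

lemma transfer:
  fixes n st :: nat and c X z :: "nat \<Rightarrow> real" and b :: real
  assumes st: "st < n" and b: "0 < b" "b \<le> 1"
    and cvals: "\<And>s. s < n \<Longrightarrow> s \<noteq> st \<Longrightarrow> c s = 0 \<or> c s = 1/2 \<or> c s = 1"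
    and z: "\<And>s. s < n \<Longrightarrow> 0 \<le> z s" "(\<Sum>s<n. z s) = 1" "b \<le> (\<Sum>s\<in>{s. s < n \<and> s \<noteq> st}. c s * z s)"
    and Xnn: "\<And>s. s < n \<Longrightarrow> 0 \<le> X s"
  shows "\<exists>W. (\<forall>s<n. 0 \<le> W s) \<and> (\<Sum>s<n. W s) = (\<Sum>s<n. X s)
     \<and> b * (\<Sum>s<n. X s) \<le> (\<Sum>s\<in>{s. s < n \<and> s \<noteq> st}. c s * W s)
     \<and> (\<Sum>s<n. (W s - X s)^2) \<le> 8 * (max 0 (b * (\<Sum>s<n. X s) - (\<Sum>s\<in>{s. s < n \<and> s \<noteq> st}. c s * X s)))^2"
proof -
  define I where "I = {s. s < n \<and> s \<noteq> st}"
  define ch where "ch s = (if s = st then 0 else c s)" for s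
  have gI: "(\<Sum>s\<in>I. c s * Z s) = (\<Sum>s<n. ch s * Z s)" for Z :: "nat \<Rightarrow> real"
  proof -
    have "(\<Sum>s<n. ch s * Z s) = (\<Sum>s<n. if s \<in> I then c s * Z s else 0)"
      unfolding ch_def I_def by (intro sum.cong refl) auto
    also have "\<dots> = (\<Sum>s\<in>I. c s * Z s)" by (rule sum_if_in) (auto simp: I_def)
    finally show ?thesis by simp
  qed
  define M where "M = (\<Sum>s<n. X s)"
  define g where "g Z = (\<Sum>s<n. ch s * Z s)" for Z :: "nat \<Rightarrow> real"
  define \<delta> where "\<delta> = b * M - g X"
  have goal_eq: "(\<Sum>s\<in>{s. s < n \<and> s \<noteq> st}. c s * Z s) = g Z" for Z
    using gI[of Z] unfolding I_def g_def by simp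
  show ?thesis
  proof (cases "\<delta> \<le> 0")
    case True
    then show ?thesis using Xnn unfolding goal_eq by (intro exI[of _ X]) (auto simp: \<delta>_def M_def)
  next
    case False
    then have dpos: "\<delta> > 0" by simp
    have finI: "finite I" unfolding I_def by simp
    have chv: "ch s = 0 \<or> ch s = 1/2 \<or> ch s = 1" if "s < n" for s
      using cvals[OF that] unfolding ch_def by auto
    have Ine: "I \<noteq> {}"
    proof
      assume "I = {}"
      then have "(\<Sum>s\<in>I. c s * z s) = 0" by simp
      then show False using z(3) b unfolding I_def by simp
    qed
    define cm where "cm = Max (c ` I)"
    have cmI: "cm \<in> c ` I" unfolding cm_def using finI Ine by (intro Max_in) auto
    then obtain ss where ss: "ss \<in> I" "c ss = cm" by auto
    have cle: "c s \<le> cm" if "s \<in> I" for s unfolding cm_def using finI that by (intro Max_ge) auto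
    have ssn: "ss < n" "ss \<noteq> st" using ss unfolding I_def by auto
    have chss: "ch ss = cm" using ss ssn unfolding ch_def by simp
    have cm0: "0 \<le> cm" using chv[OF ssn(1)] chss by auto
    have "b \<le> (\<Sum>s\<in>I. c s * z s)" using z(3) unfolding I_def by simp
    also have "\<dots> \<le> (\<Sum>s\<in>I. cm * z s)"
      using cle z(1) unfolding I_def by (intro sum_mono mult_right_mono) auto
    also have "\<dots> \<le> (\<Sum>s<n. cm * z s)"
      using z(1) cm0 unfolding I_def by (intro sum_mono2) auto
    also have "\<dots> = cm" using z(2) by (simp add: sum_distrib_left[symmetric])
    finally have bcm: "b \<le> cm" .
    have cmh: "cm = 1/2 \<or> cm = 1" using chv[OF ssn(1)] chss bcm b by auto
    define L where "L = {s. s < n \<and> ch s \<noteq> cm}"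
    have Ln: "L \<subseteq> {..<n}" unfolding L_def by auto
    have ssL: "ss \<notin> L" unfolding L_def using chss by auto
    have chL: "ch s \<le> cm - 1/2" if "s \<in> L" for s
    proof (cases "s = st")
      case True then show ?thesis using cmh unfolding ch_def by auto
    next
      case False
      then have "s \<in> I" "s < n" using that unfolding I_def L_def by auto
      then have "ch s \<le> cm" "ch s \<noteq> cm" using cle[of s] False that unfolding ch_def L_def by auto
      then show ?thesis using chv[OF \<open>s < n\<close>] cmh by auto
    qed
    define mL where "mL = sum X L"
    define \<Gamma> where "\<Gamma> = (\<Sum>s\<in>L. (cm - ch s) * X s)"
    have mL0: "0 \<le> mL" unfolding mL_def using Xnn Ln by (intro sum_nonneg) auto
    have GmL: "mL / 2 \<le> \<Gamma>" unfolding mL_def \<Gamma>_def sum_divide_distrib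
    proof (rule sum_mono)
      fix s assume sL: "s \<in> L"
      have "1/2 \<le> cm - ch s" using chL[OF sL] by simp
      moreover have "0 \<le> X s" using Xnn sL Ln by auto
      ultimately have "1/2 * X s \<le> (cm - ch s) * X s" by (rule mult_right_mono)
      then show "X s / 2 \<le> (cm - ch s) * X s" by simp
    qed
    have gX: "g X = cm * M - \<Gamma>"
    proof -
      have "g X = (\<Sum>s<n. cm * X s - (if s \<in> L then (cm - ch s) * X s else 0))"
        unfolding g_def L_def by (intro sum.cong refl) (auto simp: algebra_simps)
      also have "\<dots> = cm * M - \<Gamma>" unfolding \<Gamma>_def M_def
        by (simp add: sum_subtractf sum_distrib_left sum_if_in[OF Ln])
      finally show ?thesis .
    qed
    have M0: "0 \<le> M" unfolding M_def using Xnn by (intro sum_nonneg) auto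
    have "b * M \<le> cm * M" using bcm M0 by (rule mult_right_mono)
    then have Gd: "\<delta> \<le> \<Gamma>" using gX unfolding \<delta>_def by linarith
    then have Gpos: "\<Gamma> > 0" using dpos by simp
    define \<theta> where "\<theta> = \<delta> / \<Gamma>"
    have th: "0 < \<theta>" "\<theta> \<le> 1" unfolding \<theta>_def using dpos Gpos Gd by auto
    have thG: "\<theta> * \<Gamma> = \<delta>" unfolding \<theta>_def using Gpos by simp
    define W where "W s = X s - \<theta> * (if s \<in> L then X s else 0) + (if s = ss then \<theta> * mL else 0)" for s
    have Wnn: "\<forall>s<n. 0 \<le> W s"
    proof (intro allI impI)
      fix s assume "s < n"
      have "0 \<le> X s - \<theta> * (if s \<in> L then X s else 0)"
        using Xnn[OF \<open>s < n\<close>] th by (auto simp: mult_left_le_one_le)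
      moreover have "0 \<le> (if s = ss then \<theta> * mL else 0)" using th mL0 by auto
      ultimately show "0 \<le> W s" unfolding W_def by linarith
    qed
    have sumW: "(\<Sum>s<n. W s) = M"
      unfolding W_def M_def mL_def using ssn
      by (simp add: sum.distrib sum_subtractf sum_distrib_left[symmetric] sum_if_in[OF Ln])
    have gW: "g W = g X + \<theta> * \<Gamma>"
    proof -
      have "g W = (\<Sum>s<n. ch s * X s + \<theta> * ((if s = ss then cm * mL else 0) - (if s \<in> L then ch s * X s else 0)))"
        unfolding g_def W_def using chss by (intro sum.cong refl) (auto simp: algebra_simps)
      also have "\<dots> = g X + \<theta> * (cm * mL - (\<Sum>s\<in>L. ch s * X s))"
        unfolding g_def using ssn
        by (simp add: sum.distrib sum_subtractf sum_distrib_left[symmetric] sum_if_in[OF Ln])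
      also have "cm * mL - (\<Sum>s\<in>L. ch s * X s) = \<Gamma>" unfolding mL_def \<Gamma>_def
        by (simp add: sum_distrib_left sum_subtractf left_diff_distrib)
      finally show ?thesis .
    qed
    have gWb: "b * M \<le> g W" using gW thG unfolding \<delta>_def by simp
    have sq: "(\<Sum>s<n. (W s - X s)^2) \<le> 8 * \<delta>^2"
    proof -
      have "(\<Sum>s<n. (W s - X s)^2) = (\<Sum>s<n. (if s = ss then (\<theta> * mL)^2 else 0) + (if s \<in> L then (\<theta> * X s)^2 else 0))"
        unfolding W_def using ssL by (intro sum.cong refl) (auto simp: power2_eq_square)
      also have "\<dots> = (\<theta> * mL)^2 + (\<Sum>s\<in>L. (\<theta> * X s)^2)"
        using ssn by (simp add: sum.distrib sum_if_in[OF Ln])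
      also have "(\<Sum>s\<in>L. (\<theta> * X s)^2) \<le> (\<Sum>s\<in>L. \<theta>^2 * (mL * X s))"
      proof (rule sum_mono)
        fix s assume sL: "s \<in> L"
        have "X s \<le> mL" unfolding mL_def using sL Ln Xnn
          by (intro member_le_sum) (auto simp: finite_subset[OF Ln])
        then have "X s * X s \<le> mL * X s" using Xnn sL Ln by (intro mult_right_mono) auto
        then have "\<theta>^2 * (X s * X s) \<le> \<theta>^2 * (mL * X s)" by (intro mult_left_mono) auto
        then show "(\<theta> * X s)^2 \<le> \<theta>^2 * (mL * X s)" by (simp add: power2_eq_square mult_ac)
      qed
      also have "(\<Sum>s\<in>L. \<theta>^2 * (mL * X s)) = \<theta>^2 * mL * (\<Sum>s\<in>L. X s)"
        by (simp add: sum_distrib_left[symmetric] mult.assoc[symmetric])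
      also have "\<dots> = (\<theta> * mL)^2" unfolding mL_def by (simp add: power2_eq_square)
      finally have "(\<Sum>s<n. (W s - X s)^2) \<le> 2 * (\<theta> * mL)^2" by simp
      also have "\<theta> * mL \<le> 2 * \<delta>"
      proof -
        have "\<theta> * (mL / 2) \<le> \<theta> * \<Gamma>" using GmL th by (intro mult_left_mono) auto
        then show ?thesis using thG by simp
      qed
      then have "(\<theta> * mL)^2 \<le> (2 * \<delta>)^2" using th mL0 by (intro power_mono) auto
      finally show ?thesis by (simp add: power_mult_distrib)
    qed
    show ?thesis
      using Wnn sumW gWb sq dpos unfolding goal_eq M_def[symmetric] \<delta>_def[symmetric]
      by (intro exI[of _ W]) auto
  qed
qed

lemma normU_qf: "normU n U v = sqrt (qf n U v)" unfolding normU_def qf_def by simp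

lemma final_part:
  fixes n st a :: nat and U :: "real mat" and y :: "nat \<Rightarrow> nat \<Rightarrow> real" and b \<eta> lam K M :: real
    and X :: "nat \<Rightarrow> real"
  assumes n: "n > 0" and sy: "symm n U"
    and psd: "\<And>v. (\<Sum>l<n. (v l)^2) \<le> qf n U v"
    and ray: "\<And>v. qf n U v \<le> lam * (\<Sum>i<n. (v i)^2)"
    and st: "st < n" and b: "0 < b" "b \<le> 1"
    and cvals: "\<And>s. s < n \<Longrightarrow> s \<noteq> st \<Longrightarrow> pibar y a s = 0 \<or> pibar y a s = 1/2 \<or> pibar y a s = 1"
    and feas: "socp_feasible n y st a b \<noteq> {}"
    and Xnn: "\<And>s. s < n \<Longrightarrow> 0 \<le> X s" and M: "M = (\<Sum>s<n. X s)"
    and eta: "\<eta> \<le> socp_value n U y st a b"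
    and K: "K > 0"
    and cond: "normU n U (\<lambda>s. X s - M * mu_star y s) \<le> \<eta> * M - 2 * sqrt 2 * sqrt lam * K"
  shows "(\<Sum>s\<in>{s. s < n \<and> s \<noteq> st}. pibar y a s * X s) \<le> b * M - K"
proof (rule ccontr)
  assume contra: "\<not> ?thesis"
  let ?g = "\<lambda>Z. (\<Sum>s\<in>{s. s < n \<and> s \<noteq> st}. pibar y a s * Z s)"
  have psd0: "0 \<le> qf n U v" for v using psd[of v] by (smt (verit) sum_nonneg zero_le_power2)
  have nU0: "0 \<le> normU n U v" for v unfolding normU_qf using psd0 by simp
  have lam1: "1 \<le> lam"
  proof -
    define e where "e = (\<lambda>i::nat. if i = 0 then 1 else (0::real))"
    have "(\<Sum>l<n. (e l)^2) = (\<Sum>l\<in>{..<n}. if l = 0 then 1 else 0)" unfolding e_def by (rule sum.cong) auto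
    then have "(\<Sum>l<n. (e l)^2) = 1" using n by simp
    then show ?thesis using psd[of e] ray[of e] by simp
  qed
  obtain z where z: "z \<in> socp_feasible n y st a b" using feas by auto
  have zz: "\<And>s. s < n \<Longrightarrow> 0 \<le> z s" "(\<Sum>s<n. z s) = 1" "b \<le> ?g z"
    using z unfolding socp_feasible_def by auto
  obtain W where W: "\<forall>s<n. 0 \<le> W s" "(\<Sum>s<n. W s) = M" "b * M \<le> ?g W"
     "(\<Sum>s<n. (W s - X s)^2) \<le> 8 * (max 0 (b * M - ?g X))^2"
    using transfer[of st n b "pibar y a" z X, OF st b cvals zz(1) zz(2) zz(3) Xnn] unfolding M by blast
  define d where "d = max 0 (b * M - ?g X)"
  have d: "0 \<le> d" "d < K" unfolding d_def using contra K by auto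
  have "qf n U (\<lambda>s. W s - X s) \<le> lam * (8 * d^2)"
    using ray[of "\<lambda>s. W s - X s"] W(4) lam1 unfolding d_def
    by (smt (verit) mult_left_mono)
  then have "normU n U (\<lambda>s. W s - X s) \<le> sqrt (lam * (8 * d^2))" unfolding normU_qf
    by (rule real_sqrt_le_mono)
  also have "sqrt (lam * (8 * d^2)) = 2 * sqrt 2 * sqrt lam * d"
  proof -
    have s8: "sqrt (8::real) = 2 * sqrt 2"
    proof -
      have "sqrt (2^2 * 2) = sqrt (2^2) * sqrt (2::real)" by (rule real_sqrt_mult)
      then show ?thesis by simp
    qed
    have "sqrt (lam * (8 * d^2)) = sqrt lam * sqrt 8 * sqrt (d^2)" by (simp add: real_sqrt_mult)
    also have "\<dots> = sqrt lam * (2 * sqrt 2) * d" using d s8 by simp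
    finally show ?thesis by (simp add: mult_ac)
  qed
  also have "\<dots> < 2 * sqrt 2 * sqrt lam * K" using d lam1 by (intro mult_strict_left_mono) auto
  finally have nWX: "normU n U (\<lambda>s. W s - X s) < 2 * sqrt 2 * sqrt lam * K" .
  have epos: "0 < 2 * sqrt 2 * sqrt lam * K" using lam1 K by simp
  have M0: "0 \<le> M" unfolding M using Xnn by (intro sum_nonneg) auto
  show False
  proof (cases "M = 0")
    case True
    then show False using cond nU0[of "\<lambda>s. X s - M * mu_star y s"] epos by simp
  next
    case False
    then have Mpos: "M > 0" using M0 by simp
    define z' where "z' s = W s / M" for s
    have "z' \<in> socp_feasible n y st a b"
    proof -
      have "?g z' = ?g W / M" unfolding z'_def by (simp add: sum_divide_distrib)
      moreover have "b \<le> ?g W / M" using W(3) Mpos by (simp add: field_simps)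
      moreover have "(\<Sum>s<n. z' s) = 1" unfolding z'_def using W(2) Mpos by (simp add: sum_divide_distrib[symmetric])
      ultimately show ?thesis using W(1) Mpos unfolding socp_feasible_def z'_def by auto
    qed
    then have "socp_value n U y st a b \<le> normU n U (\<lambda>s. z' s - mu_star y s)"
      unfolding socp_value_def by (rule cInf_lower[OF imageI]) (auto intro: bdd_belowI[of _ 0] nU0)
    then have "\<eta> * M \<le> normU n U (\<lambda>s. z' s - mu_star y s) * M" using eta Mpos by (intro mult_right_mono) auto
    also have "normU n U (\<lambda>s. z' s - mu_star y s) * M = normU n U (\<lambda>s. W s - M * mu_star y s)"
    proof -
      have "qf n U (\<lambda>s. W s - M * mu_star y s) = qf n U (\<lambda>s. M * (z' s - mu_star y s))"
        unfolding z'_def using Mpos by (intro qf_cong) (simp add: field_simps)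
      also have "\<dots> = M^2 * qf n U (\<lambda>s. z' s - mu_star y s)" by (rule qf_scale)
      finally show ?thesis unfolding normU_qf using Mpos by (simp add: real_sqrt_mult)
    qed
    also have "normU n U (\<lambda>s. W s - M * mu_star y s) \<le> normU n U (\<lambda>s. X s - M * mu_star y s) + normU n U (\<lambda>s. W s - X s)"
    proof -
      have "(\<lambda>s. W s - M * mu_star y s) = (\<lambda>s. (X s - M * mu_star y s) + (W s - X s))" by auto
      then show ?thesis unfolding normU_qf using tri[OF sy psd0, of "\<lambda>s. X s - M * mu_star y s" "\<lambda>s. W s - X s"]
        by simp
    qed
    finally show False using cond nWX by simp
  qed
qed

lemma pibar_vals: assumes "0 \<le> y s 0" "0 \<le> y s 1" "\<not> (y s 0 > 0 \<and> y s 1 > 0)" "a = 0 \<or> a = 1"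
  shows "pibar y a s = 0 \<or> pibar y a s = 1/2 \<or> pibar y a s = 1"
proof (cases "y s 0 + y s 1 > 0")
  case True
  then have "y s 0 = 0 \<or> y s 1 = 0" using assms by auto
  then show ?thesis using assms True unfolding pibar_def by auto
next
  case False then show ?thesis unfolding pibar_def by simp
qed

lemma sum_xD: assumes "\<forall>i\<in>{1..N}. Sa i < n" "D \<subseteq> {1..N}"
  shows "(\<Sum>s<n. xD N Sa D s) = mD N D"
proof -
  have finD: "finite D" using assms(2) finite_subset by blast
  have "D = (\<Union>s\<in>{..<n}. {i\<in>D. Sa i = s})" using assms by auto
  moreover have "card (\<Union>s\<in>{..<n}. {i\<in>D. Sa i = s}) = (\<Sum>s<n. card {i\<in>D. Sa i = s})"
    by (rule card_UN_disjoint) (use finD in auto)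
  ultimately have "card D = (\<Sum>s<n. card {i\<in>D. Sa i = s})" by simp
  then show ?thesis unfolding xD_def mD_def by (simp add: sum_divide_distrib[symmetric])
qed

theorem mainTheorem14:
  fixes n N :: nat and P :: "nat \<Rightarrow> nat \<Rightarrow> nat \<Rightarrow> real" and r y :: "nat \<Rightarrow> nat \<Rightarrow> real"
    and \<alpha> :: real and st :: nat and Sa :: "nat \<Rightarrow> nat" and D :: "nat set"
  assumes mdp: "is_mdp n P"
    and alpha: "0 < \<alpha>" "\<alpha> < 1"
    and opt: "lp_optimal n P r \<alpha> y"
    and A1: "assumption1 (P_pibar n P y)"
    and A2: "st < n" "y st 0 > 0" "y st 1 > 0"
      "\<forall>s<n. y s 0 > 0 \<and> y s 1 > 0 \<longrightarrow> s = st"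
    and A3: "assumption3 (Phi_mat n P \<alpha> y st)"
    and feas1: "socp_feasible n y st 1 \<alpha> \<noteq> {}"
    and feas2: "socp_feasible n y st 0 (1 - \<alpha>) \<noteq> {}"
    and N: "N > 0"
    and arms: "\<forall>i\<in>{1..N}. Sa i < n"
    and D: "D \<subseteq> {1..N}"
    and cond: "let U = U_mat (Phi_mat n P \<alpha> y st);
                   \<eta> = min (socp_value n U y st 1 \<alpha>) (socp_value n U y st 0 (1 - \<alpha>));
                   eps = 2 * sqrt 2 * sqrt (lambda_max U) * (real (card (S_empty n y)) + 1) / real N
               in normU n U (\<lambda>s. xD N Sa D s - mD N D * mu_star y s) \<le> \<eta> * mD N D - eps"
  shows "((\<Sum>s\<in>{s. s < n \<and> s \<noteq> st}. pibar y 1 s * xD N Sa D s)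
           \<le> \<alpha> * mD N D - (real (card (S_empty n y)) + 1) / real N)
    \<and> ((\<Sum>s\<in>{s. s < n \<and> s \<noteq> st}. pibar y 0 s * xD N Sa D s)
           \<le> (1 - \<alpha>) * mD N D - (real (card (S_empty n y)) + 1) / real N)"
proof -
  have n: "n > 0" using A2(1) by simp
  define Phi where "Phi = Phi_mat n P \<alpha> y st"
  have Phic: "Phi \<in> carrier_mat n n" unfolding Phi_def Phi_mat_def by simp
  define U where "U = U_mat Phi"
  have Uc: "U \<in> carrier_mat n n" unfolding U_def by (rule U_props(3)[OF Phic n A3[folded Phi_def]])
  have sy: "symm n U" unfolding symm_def U_def using U_props(1)[OF Phic n A3[folded Phi_def]] by blast
  have psd: "\<And>v. (\<Sum>l<n. (v l)^2) \<le> qf n U v" unfolding U_def by (rule U_props(2)[OF Phic n A3[folded Phi_def]])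
  have ray: "\<And>v. qf n U v \<le> lambda_max U * (\<Sum>i<n. (v i)^2)" by (rule rayleigh[OF Uc n sy])
  have ynn: "\<And>s a. s < n \<Longrightarrow> a < 2 \<Longrightarrow> 0 \<le> y s a"
    using opt unfolding lp_optimal_def lp_feasible_def by auto
  have cv: "\<And>s. s < n \<Longrightarrow> s \<noteq> st \<Longrightarrow> pibar y a s = 0 \<or> pibar y a s = 1/2 \<or> pibar y a s = 1"
    if "a = 0 \<or> a = 1" for a
  proof -
    fix s assume s: "s < n" "s \<noteq> st"
    show "pibar y a s = 0 \<or> pibar y a s = 1/2 \<or> pibar y a s = 1"
      by (rule pibar_vals) (use ynn[of s 0] ynn[of s 1] A2(4) s that in auto)
  qed
  define K where "K = (real (card (S_empty n y)) + 1) / real N"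
  have K: "K > 0" unfolding K_def using N by simp
  have Xnn: "\<And>s. s < n \<Longrightarrow> 0 \<le> xD N Sa D s" unfolding xD_def by simp
  have M: "mD N D = (\<Sum>s<n. xD N Sa D s)" using sum_xD[OF arms D] by simp
  define \<eta> where "\<eta> = min (socp_value n U y st 1 \<alpha>) (socp_value n U y st 0 (1 - \<alpha>))"
  have c: "normU n U (\<lambda>s. xD N Sa D s - mD N D * mu_star y s) \<le> \<eta> * mD N D - 2 * sqrt 2 * sqrt (lambda_max U) * K"
    using cond unfolding Let_def U_def Phi_def \<eta>_def K_def by (simp add: mult.assoc)
  have p1: "(\<Sum>s\<in>{s. s < n \<and> s \<noteq> st}. pibar y 1 s * xD N Sa D s) \<le> \<alpha> * mD N D - K"
    by (rule final_part[OF n sy psd ray A2(1) alpha(1) _ cv feas1 Xnn M _ K c]) (use alpha in \<open>auto simp: \<eta>_def\<close>)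
  have p2: "(\<Sum>s\<in>{s. s < n \<and> s \<noteq> st}. pibar y 0 s * xD N Sa D s) \<le> (1 - \<alpha>) * mD N D - K"
    by (rule final_part[OF n sy psd ray A2(1) _ _ cv feas2 Xnn M _ K c]) (use alpha in \<open>auto simp: \<eta>_def\<close>)
  show ?thesis using p1 p2 unfolding K_def by simp
qed

end
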